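(* Let $\mathbf P$ be a pentagon. For every constant $D\ge 1$ there is a linear reduction from $\mathsf{Lattice\text{-}Eval}(\mathbb L(\mathbf P),D)$ to $\mathsf{Pent\text{-}Eval}(\mathbf P)$.
   Context: For a set $X$, $\mathrm{Eq}(X)$ is the lattice of equivalence relations on $X$, with bottom $0_X=\{(a,a)\}$ and top $1_X=X^2$; $\theta\circ\theta'$ is relational product. A pentagon is a finite structure $\mathbf P$ with domain $P$ and three equivalence relations $\alpha^{\mathbf P},\beta^{\mathbf P},\gamma^{\mathbf P}$ on $P$ such that in $\mathrm{Eq}(P)$: $\alpha^{\mathbf P}\le\beta^{\mathbf P}$, $\beta^{\mathbf P}\wedge\gamma^{\mathbf P}=0_P$, $\beta^{\mathbf P}\circ\gamma^{\mathbf P}=1_P$, $\alpha^{\mathbf P}\vee\gamma^{\mathbf P}=1_P$. Then $P$ decomposes as $P=B_{\mathbf P}\times C_{\mathbf P}$ so that $\beta^{\mathbf P},\gamma^{\mathbf P}$ are the kernels of the projections onto $B_{\mathbf P}$ and $C_{\mathbf P}$ respectively. For $b\in B_{\mathbf P}$ let $\alpha^{\mathbf P}_b=\{(c,c')\in C_{\mathbf P}^2\mid((b,c),(b,c'))\in\alpha^{\mathbf P}\}$, and let $\mathbb L(\mathbf P)$ be the sublattice of $\mathrm{Eq}(C_{\mathbf P})$ generated by $\{\alpha^{\mathbf P}_b: b\in B_{\mathbf P}\}$. $\mathbf P_2$ is the 2-sorted structure with sorts $B_{\mathbf P}$ (first) and $C_{\mathbf P}$ (second) and one ternary relation $R=\{(b,c,c')\in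 B_{\mathbf P}\times C_{\mathbf P}\times C_{\mathbf P}\mid (c,c')\in\alpha^{\mathbf P}_b\}$; in atoms $R(x,y,y')$, $x$ is of first sort and $y,y'$ of second sort. $\mathsf{Pent\text{-}Eval}(\mathbf P)$: instances are a primitive-positive formula $\phi(X,Y)$ over $\{R\}$ (conjunction of atoms with some variables existentially quantified) with free variables $X$ of first sort and $Y$ of second sort ($X\cap Y=\emptyset$), and weights $w:X\cup Y\to[0,1]$ summing to 1; assignments map $X$ to $B_{\mathbf P}$ and $Y$ to $C_{\mathbf P}$ and are satisfying if $\phi$ is true in $\mathbf P_2$. For a finite lattice $\mathbb L$ and $D$, $\mathsf{Lattice\text{-}Eval}(\mathbb L,D)$: instances are a circuit $C$ on variables $V$ over $\{\wedge,\vee\}$ (fan-in 2) of depth $<D+D\log_2|V|$, an element $\ell\in L$, and weights $w$ on $V$ summing to 1; $f:V\to L$ is satisfying if $C(f)\ge\ell$. In both problems $\mathrm{dist}_{\mathcal I}(f)$ is the minimum weight of the set of free variables on which $f$ differs from some satisfying assignment. A linear reduction from $\mathcal P$ to $\mathcal P'$: given $(\mathcal I,f)$ with $\mathcal I$ on variable set $V$, it (possibly randomly) produces $(\mathcal I',f')$ with $|V'|=O(|V|)$ such that (i) $f$ satisfying implies $f'$ satisfying; (ii) for a constant $c_1>0$ and every $\epsilon\in(0,1)$, $\mathrm{dist}_{\mathcal I}(f)\ge\epsilon$ implies $\Pr[\mathrm{dist}_{\mathcal I'}(f')\ge c_1\epsilon]\ge9/10$; (iii) each value of $f'$ is computable with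 $O(1)$ queries to $f$. *)

theory Defs
  imports "HOL-Probability.Probability"
begin

text \<open>Join in Eq(P) of equivalences on P is the
  transitive closure of the union; relational product is O.\<close>

definition pentagon :: "'a set \<Rightarrow> ('a \<times> 'a) set \<Rightarrow> ('a \<times> 'a) set \<Rightarrow> ('a \<times> 'a) set \<Rightarrow> bool" where
  "pentagon P al be ga \<longleftrightarrow>
     finite P \<and> equiv P al \<and> equiv P be \<and> equiv P ga \<and>
     al \<subseteq> be \<and> be \<inter> ga = Id_on P \<and> be O ga = P \<times> P \<and> (al \<union> ga)\<^sup>+ = P \<times> P"

text \<open>Canonical decomposition: B_P = P // be and C_P = P // ga; the point (b,c) of B_P x C_P is
  the unique element of the intersection of the classes b and c.\<close>

type_synonym 'a crel = "('a set \<times> 'a set) set"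

definition alpha_b :: "'a set \<Rightarrow> ('a \<times> 'a) set \<Rightarrow> ('a \<times> 'a) set \<Rightarrow> 'a set \<Rightarrow> 'a crel" where
  "alpha_b P al ga b = {(c, c'). c \<in> P // ga \<and> c' \<in> P // ga \<and>
      (\<exists>p p'. p \<in> b \<inter> c \<and> p' \<in> b \<inter> c' \<and> (p, p') \<in> al)}"

inductive_set LP :: "'a set \<Rightarrow> ('a \<times> 'a) set \<Rightarrow> ('a \<times> 'a) set \<Rightarrow> ('a \<times> 'a) set \<Rightarrow> 'a crel set"
  for P al be ga where
  gen: "b \<in> P // be \<Longrightarrow> alpha_b P al ga b \<in> LP P al be ga"
| meet: "x \<in> LP P al be ga \<Longrightarrow> y \<in> LP P al be ga \<Longrightarrow> x \<inter> y \<in> LP P al be ga"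
| join: "x \<in> LP P al be ga \<Longrightarrow> y \<in> LP P al be ga \<Longrightarrow> (x \<union> y)\<^sup>+ \<in> LP P al be ga"

definition pR :: "'a set \<Rightarrow> ('a \<times> 'a) set \<Rightarrow> ('a \<times> 'a) set \<Rightarrow> ('a \<times> 'a) set \<Rightarrow>
    'a set \<Rightarrow> 'a set \<Rightarrow> 'a set \<Rightarrow> bool" where
  "pR P al be ga b c c' \<longleftrightarrow> b \<in> P // be \<and> c \<in> P // ga \<and> c' \<in> P // ga \<and> (c, c') \<in> alpha_b P al ga b"

datatype 'v circ = CVar 'v | CMeet "'v circ" "'v circ" | CJoin "'v circ" "'v circ"

fun circ_vars :: "'v circ \<Rightarrow> 'v set" where
  "circ_vars (CVar v) = {v}"
| "circ_vars (CMeet a b) = circ_vars a \<union> circ_vars b"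
| "circ_vars (CJoin a b) = circ_vars a \<union> circ_vars b"

fun circ_depth :: "'v circ \<Rightarrow> nat" where
  "circ_depth (CVar v) = 0"
| "circ_depth (CMeet a b) = Suc (max (circ_depth a) (circ_depth b))"
| "circ_depth (CJoin a b) = Suc (max (circ_depth a) (circ_depth b))"

fun circ_eval :: "('v \<Rightarrow> 'a crel) \<Rightarrow> 'v circ \<Rightarrow> 'a crel" where
  "circ_eval f (CVar v) = f v"
| "circ_eval f (CMeet a b) = circ_eval f a \<inter> circ_eval f b"
| "circ_eval f (CJoin a b) = (circ_eval f a \<union> circ_eval f b)\<^sup>+"

record ('v, 'a) lat_inst =
  LV :: "'v set"
  LC :: "'v circ"
  Lell :: "'a crel"
  Lw :: "'v \<Rightarrow> real"

definition lat_valid :: "'a crel set \<Rightarrow> real \<Rightarrow> ('v, 'a) lat_inst \<Rightarrow> bool" where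
  "lat_valid L D I \<longleftrightarrow> finite (LV I) \<and> circ_vars (LC I) \<subseteq> LV I \<and>
     real (circ_depth (LC I)) < D + D * log 2 (real (card (LV I))) \<and>
     Lell I \<in> L \<and> (\<forall>v \<in> LV I. 0 \<le> Lw I v \<and> Lw I v \<le> 1) \<and> sum (Lw I) (LV I) = 1"

definition lat_assign :: "'a crel set \<Rightarrow> ('v, 'a) lat_inst \<Rightarrow> ('v \<Rightarrow> 'a crel) \<Rightarrow> bool" where
  "lat_assign L I f \<longleftrightarrow> (\<forall>v \<in> LV I. f v \<in> L)"

definition lat_sat :: "'a crel set \<Rightarrow> ('v, 'a) lat_inst \<Rightarrow> ('v \<Rightarrow> 'a crel) \<Rightarrow> bool" where
  "lat_sat L I f \<longleftrightarrow> lat_assign L I f \<and> Lell I \<subseteq> circ_eval f (LC I)"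

definition lat_dist :: "'a crel set \<Rightarrow> ('v, 'a) lat_inst \<Rightarrow> ('v \<Rightarrow> 'a crel) \<Rightarrow> ereal" where
  "lat_dist L I f = Inf {ereal (sum (Lw I) {v \<in> LV I. f v \<noteq> g v}) | g. lat_sat L I g}"

text \<open>A primitive-positive formula: free variables PX (first sort), PY (second sort),
  existentially quantified variables PEX (first sort), PEY (second sort), and a list of
  atoms R(x,y,y').\<close>

record 'w pent_inst =
  PX :: "'w set"
  PY :: "'w set"
  PEX :: "'w set"
  PEY :: "'w set"
  Patoms :: "('w \<times> 'w \<times> 'w) list"
  Pw :: "'w \<Rightarrow> real"

definition pent_valid :: "'w pent_inst \<Rightarrow> bool" where
  "pent_valid I \<longleftrightarrow> finite (PX I) \<and> finite (PY I) \<and> finite (PEX I) \<and> finite (PEY I) \<and>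
     PX I \<inter> PY I = {} \<and> PX I \<inter> PEX I = {} \<and> PX I \<inter> PEY I = {} \<and>
     PY I \<inter> PEX I = {} \<and> PY I \<inter> PEY I = {} \<and> PEX I \<inter> PEY I = {} \<and>
     (\<forall>(x, y, y') \<in> set (Patoms I). x \<in> PX I \<union> PEX I \<and> y \<in> PY I \<union> PEY I \<and> y' \<in> PY I \<union> PEY I) \<and>
     (\<forall>v \<in> PX I \<union> PY I. 0 \<le> Pw I v \<and> Pw I v \<le> 1) \<and> sum (Pw I) (PX I \<union> PY I) = 1"

definition pent_assign :: "'a set \<Rightarrow> ('a \<times> 'a) set \<Rightarrow> ('a \<times> 'a) set \<Rightarrow> 'w pent_inst \<Rightarrow> ('w \<Rightarrow> 'a set) \<Rightarrow> bool" where
  "pent_assign P be ga I g \<longleftrightarrow> (\<forall>x \<in> PX I. g x \<in> P // be) \<and> (\<forall>y \<in> PY I. g y \<in> P // ga)"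

definition pent_sat :: "'a set \<Rightarrow> ('a \<times> 'a) set \<Rightarrow> ('a \<times> 'a) set \<Rightarrow> ('a \<times> 'a) set \<Rightarrow>
    'w pent_inst \<Rightarrow> ('w \<Rightarrow> 'a set) \<Rightarrow> bool" where
  "pent_sat P al be ga I g \<longleftrightarrow> pent_assign P be ga I g \<and>
     (\<exists>h. (\<forall>v \<in> PX I \<union> PY I. h v = g v) \<and> (\<forall>x \<in> PEX I. h x \<in> P // be) \<and>
          (\<forall>y \<in> PEY I. h y \<in> P // ga) \<and>
          (\<forall>(x, y, y') \<in> set (Patoms I). pR P al be ga (h x) (h y) (h y')))"

definition pent_dist :: "'a set \<Rightarrow> ('a \<times> 'a) set \<Rightarrow> ('a \<times> 'a) set \<Rightarrow> ('a \<times> 'a) set \<Rightarrow>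
    'w pent_inst \<Rightarrow> ('w \<Rightarrow> 'a set) \<Rightarrow> ereal" where
  "pent_dist P al be ga I g =
     Inf {ereal (sum (Pw I) {v \<in> PX I \<union> PY I. g v \<noteq> h v}) | h. pent_sat P al be ga I h}"

text \<open>A (randomized) reduction maps a source instance I to a distribution over pairs (I', dec):
  I' is the produced Pent-Eval instance (variables of type 'v * nat) and dec turns the source
  assignment f into f' = dec f.\<close>

definition linear_reduction ::
  "'a set \<Rightarrow> ('a \<times> 'a) set \<Rightarrow> ('a \<times> 'a) set \<Rightarrow> ('a \<times> 'a) set \<Rightarrow> real \<Rightarrow>
   (('v, 'a) lat_inst \<Rightarrow> (('v \<times> nat) pent_inst \<times> (('v \<Rightarrow> 'a crel) \<Rightarrow> ('v \<times> nat) \<Rightarrow> 'a set)) pmf) \<Rightarrow> bool"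
  where
  "linear_reduction P al be ga D red \<longleftrightarrow>
    (\<exists>(c0::real) (c1::real) (k::nat). c0 > 0 \<and> c1 > 0 \<and>
      (\<forall>I. lat_valid (LP P al be ga) D I \<longrightarrow>
        (\<forall>(I', dec) \<in> set_pmf (red I).
            pent_valid I' \<and>
            real (card (PX I' \<union> PY I')) \<le> c0 * real (card (LV I)) \<and>
            (\<forall>v' \<in> PX I' \<union> PY I'. \<exists>Q \<subseteq> LV I. card Q \<le> k \<and>
               (\<forall>f g. (\<forall>q \<in> Q. f q = g q) \<longrightarrow> dec f v' = dec g v'))) \<and>
        (\<forall>f. lat_assign (LP P al be ga) I f \<longrightarrow>
           (\<forall>(I', dec) \<in> set_pmf (red I).
               pent_assign P be ga I' (dec f) \<and>
               (lat_sat (LP P al be ga) I f \<longrightarrow> pent_sat P al be ga I' (dec f))) \<and>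
           (\<forall>\<epsilon>::real. 0 < \<epsilon> \<and> \<epsilon> < 1 \<longrightarrow> lat_dist (LP P al be ga) I f \<ge> ereal \<epsilon> \<longrightarrow>
              measure_pmf.prob (red I)
                 {(I', dec). pent_dist P al be ga I' (dec f) \<ge> ereal (c1 * \<epsilon>)} \<ge> 9 / 10))))"

end

theory Submission
  imports Defs "HOL-Library.Nat_Bijection"
begin
datatype 'w rexp = RAtom 'w | RMeet "'w rexp" "'w rexp" | RComp "'w rexp" "'w rexp"

fun ratoms :: "(nat list \<Rightarrow> 'w) \<Rightarrow> 'w rexp \<Rightarrow> 'w \<Rightarrow> 'w \<Rightarrow> nat list \<Rightarrow> ('w \<times> 'w \<times> 'w) list" where
  "ratoms ex (RAtom x) y y' p = [(x, y, y')]"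
| "ratoms ex (RMeet a b) y y' p = ratoms ex a y y' (0 # p) @ ratoms ex b y y' (1 # p)"
| "ratoms ex (RComp a b) y y' p = ratoms ex a y (ex p) (0 # p) @ ratoms ex b (ex p) y' (1 # p)"

fun rsem :: "('w \<Rightarrow> 'c rel) \<Rightarrow> 'w rexp \<Rightarrow> 'c rel" where
  "rsem \<rho> (RAtom x) = \<rho> x"
| "rsem \<rho> (RMeet a b) = rsem \<rho> a \<inter> rsem \<rho> b"
| "rsem \<rho> (RComp a b) = rsem \<rho> a O rsem \<rho> b"

fun anames :: "'w rexp \<Rightarrow> 'w set" where
  "anames (RAtom x) = {x}"
| "anames (RMeet a b) = anames a \<union> anames b"
| "anames (RComp a b) = anames a \<union> anames b"

fun exps :: "'w rexp \<Rightarrow> nat list \<Rightarrow> nat list set" where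
  "exps (RAtom x) p = {}"
| "exps (RMeet a b) p = exps a (0 # p) \<union> exps b (1 # p)"
| "exps (RComp a b) p = {p} \<union> exps a (0 # p) \<union> exps b (1 # p)"

definition under :: "nat list \<Rightarrow> nat list set" where
  "under p = {q. \<exists>s. q = s @ p}"

lemma finite_exps: "finite (exps e p)"
  by (induction e arbitrary: p) auto

lemma exps_under: "exps e p \<subseteq> under p"
proof (induction e arbitrary: p)
  case (RAtom x) then show ?case by simp
next
  case (RMeet a b)
  have "under (0#p) \<subseteq> under p" "under (1#p) \<subseteq> under p"
    unfolding under_def by (auto intro: exI[where x="_ @ [_]"])
  with RMeet show ?case by fastforce
next
  case (RComp a b)
  have "under (0#p) \<subseteq> under p" "under (1#p) \<subseteq> under p" "p \<in> under p"
    unfolding under_def by (auto intro: exI[where x="_ @ [_]"])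
  with RComp show ?case by fastforce
qed

lemma under_sub: "under (i#p) \<subseteq> under p"
  unfolding under_def by (auto intro: exI[where x="_ @ [_]"])

lemma under_disj: "i \<noteq> j \<Longrightarrow> under (i#p) \<inter> under (j#p) = {}"
  unfolding under_def by auto

lemma not_under_self: "p \<notin> under (i#p)"
  unfolding under_def by (auto dest: arg_cong[where f=length])

lemma ratoms_names:
  "(x, z, z') \<in> set (ratoms ex e y y' p) \<Longrightarrow>
     x \<in> anames e \<and> z \<in> {y, y'} \<union> ex ` exps e p \<and> z' \<in> {y, y'} \<union> ex ` exps e p"
  by (induction e arbitrary: y y' p) fastforce+

lemma notin_helper: "z \<in> {y,y'} \<union> E \<Longrightarrow> y \<notin> U \<Longrightarrow> y' \<notin> U \<Longrightarrow> E \<inter> U = {} \<Longrightarrow> z \<notin> U"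
  by blast

lemma ratoms_sound:
  assumes "\<forall>(x, z, z') \<in> set (ratoms ex e y y' p). (h z, h z') \<in> \<rho> x"
  shows "(h y, h y') \<in> rsem \<rho> e"
  using assms by (induction e arbitrary: y y' p) fastforce+

lemma rsem_sub: "(\<And>x. \<rho> x \<subseteq> S \<times> S) \<Longrightarrow> rsem \<rho> e \<subseteq> S \<times> S"
  by (induction e) auto

lemma ratoms_complete:
  assumes "inj ex" "(h y, h y') \<in> rsem \<rho> e" "y \<notin> ex ` under p" "y' \<notin> ex ` under p"
    "\<And>x. \<rho> x \<subseteq> S \<times> S"
  shows "\<exists>h'. (\<forall>w. w \<notin> ex ` under p \<longrightarrow> h' w = h w) \<and> (\<forall>q \<in> exps e p. h' (ex q) \<in> S) \<and>
     (\<forall>(x, z, z') \<in> set (ratoms ex e y y' p). (h' z, h' z') \<in> \<rho> x)"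
  using assms(2-4)
proof (induction e arbitrary: h y y' p)
  case (RAtom x)
  then show ?case by (intro exI[of _ h]) auto
next
  case (RMeet a b)
  have u0: "ex ` under (0#p) \<subseteq> ex ` under p" and u1: "ex ` under (1#p) \<subseteq> ex ` under p"
    using under_sub by blast+
  from RMeet.prems have "(h y, h y') \<in> rsem \<rho> a" by simp
  from RMeet.IH(1)[OF this] RMeet.prems u0 obtain h1 where
    h1: "\<forall>w. w \<notin> ex ` under (0#p) \<longrightarrow> h1 w = h w" "\<forall>q \<in> exps a (0#p). h1 (ex q) \<in> S"
      "\<forall>(x, z, z') \<in> set (ratoms ex a y y' (0#p)). (h1 z, h1 z') \<in> \<rho> x" by blast
  have "y \<notin> ex ` under (0#p)" "y' \<notin> ex ` under (0#p)" using u0 RMeet.prems by blast+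
  hence "h1 y = h y" "h1 y' = h y'" using h1(1) by auto
  with RMeet.prems have "(h1 y, h1 y') \<in> rsem \<rho> b" by simp
  from RMeet.IH(2)[OF this] RMeet.prems u1 obtain h2 where
    h2: "\<forall>w. w \<notin> ex ` under (1#p) \<longrightarrow> h2 w = h1 w" "\<forall>q \<in> exps b (1#p). h2 (ex q) \<in> S"
      "\<forall>(x, z, z') \<in> set (ratoms ex b y y' (1#p)). (h2 z, h2 z') \<in> \<rho> x" by blast
  have disj: "ex ` under (0#p) \<inter> ex ` under (1#p) = {}"
    using under_disj[of 0 1 p] image_Int[OF assms(1), of "under (0#p)" "under (1#p)"] by simp
  have ea: "ex ` exps a (0#p) \<subseteq> ex ` under (0#p)" using exps_under by blast
  have A: "\<forall>(x, z, z') \<in> set (ratoms ex a y y' (0#p)). (h2 z, h2 z') \<in> \<rho> x"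
  proof (clarify)
    fix x z z' assume m: "(x, z, z') \<in> set (ratoms ex a y y' (0#p))"
    have E: "ex ` exps a (0#p) \<inter> ex ` under (1#p) = {}" using ea disj by blast
    have Y: "y \<notin> ex ` under (1#p)" "y' \<notin> ex ` under (1#p)" using RMeet.prems u1  by blast+
    have "z \<notin> ex ` under (1#p)" "z' \<notin> ex ` under (1#p)"
      using notin_helper[OF _ Y E] ratoms_names[OF m] by blast+
    with h2(1) h1(3) m show "(h2 z, h2 z') \<in> \<rho> x" by fastforce
  qed
  have "\<forall>q \<in> exps a (0#p). h2 (ex q) \<in> S"
  proof
    fix q assume q: "q \<in> exps a (0#p)"
    hence "ex q \<notin> ex ` under (1#p)" using ea disj by blast
    thus "h2 (ex q) \<in> S" using h2(1) h1(2) q by simp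
  qed
  moreover have "\<forall>w. w \<notin> ex ` under p \<longrightarrow> h2 w = h w"
  proof (intro allI impI)
    fix w assume w: "w \<notin> ex ` under p"
    hence w0: "w \<notin> ex ` under (0#p)" and w1: "w \<notin> ex ` under (1#p)" using u0 u1 by blast+
    have "h2 w = h1 w" using h2(1) w1 by blast
    also have "h1 w = h w" using h1(1) w0 by blast
    finally show "h2 w = h w" .
  qed
  ultimately show ?case using A h2 by (intro exI[of _ h2]) auto
next
  case (RComp a b)
  have u0: "ex ` under (0#p) \<subseteq> ex ` under p" and u1: "ex ` under (1#p) \<subseteq> ex ` under p"
    using under_sub by blast+
  have pu: "ex p \<in> ex ` under p" unfolding under_def by auto
  have pn0: "ex p \<notin> ex ` under (0#p)" and pn1: "ex p \<notin> ex ` under (1#p)"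
    using not_under_self assms(1) by (auto dest: injD)
  from RComp.prems obtain d where d: "(h y, d) \<in> rsem \<rho> a" "(d, h y') \<in> rsem \<rho> b" by auto
  have dS: "d \<in> S" using d(1) rsem_sub[of \<rho> S a, OF assms(5)] by auto
  define h0 where "h0 = h(ex p := d)"
  have "h0 y = h y" "h0 y' = h y'" "h0 (ex p) = d" using RComp.prems pu h0_def by auto
  with d have "(h0 y, h0 (ex p)) \<in> rsem \<rho> a" by simp
  from RComp.IH(1)[OF this] RComp.prems u0 pn0 obtain h1 where
    h1: "\<forall>w. w \<notin> ex ` under (0#p) \<longrightarrow> h1 w = h0 w" "\<forall>q \<in> exps a (0#p). h1 (ex q) \<in> S"
      "\<forall>(x, z, z') \<in> set (ratoms ex a y (ex p) (0#p)). (h1 z, h1 z') \<in> \<rho> x" by blast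
  have y'0: "y' \<notin> ex ` under (0#p)" using RComp.prems u0 by blast
  have "h1 (ex p) = d" using h1(1) \<open>h0 (ex p) = d\<close> pn0 by metis
  have "h1 y' = h y'" using h1(1) \<open>h0 y' = h y'\<close> y'0 by metis
  have "(h1 (ex p), h1 y') \<in> rsem \<rho> b" using d \<open>h1 (ex p) = d\<close> \<open>h1 y' = h y'\<close> by simp
  from RComp.IH(2)[OF this] RComp.prems u1 pn1 obtain h2 where
    h2: "\<forall>w. w \<notin> ex ` under (1#p) \<longrightarrow> h2 w = h1 w" "\<forall>q \<in> exps b (1#p). h2 (ex q) \<in> S"
      "\<forall>(x, z, z') \<in> set (ratoms ex b (ex p) y' (1#p)). (h2 z, h2 z') \<in> \<rho> x" by blast
  have disj: "ex ` under (0#p) \<inter> ex ` under (1#p) = {}"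
    using under_disj[of 0 1 p] image_Int[OF assms(1), of "under (0#p)" "under (1#p)"] by simp
  have ea: "ex ` exps a (0#p) \<subseteq> ex ` under (0#p)" using exps_under by blast
  have A: "\<forall>(x, z, z') \<in> set (ratoms ex a y (ex p) (0#p)). (h2 z, h2 z') \<in> \<rho> x"
  proof (clarify)
    fix x z z' assume m: "(x, z, z') \<in> set (ratoms ex a y (ex p) (0#p))"
    have E: "ex ` exps a (0#p) \<inter> ex ` under (1#p) = {}" using ea disj by blast
    have Y: "y \<notin> ex ` under (1#p)" "ex p \<notin> ex ` under (1#p)" using RComp.prems u1 pn1 by blast+
    have "z \<notin> ex ` under (1#p)" "z' \<notin> ex ` under (1#p)"
      using notin_helper[OF _ Y E] ratoms_names[OF m] by blast+
    with h2(1) h1(3) m show "(h2 z, h2 z') \<in> \<rho> x" by fastforce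
  qed
  have "\<forall>q \<in> exps a (0#p). h2 (ex q) \<in> S"
  proof
    fix q assume q: "q \<in> exps a (0#p)"
    hence "ex q \<notin> ex ` under (1#p)" using ea disj by blast
    thus "h2 (ex q) \<in> S" using h2(1) h1(2) q by simp
  qed
  moreover have "h2 (ex p) = d" using h2(1) pn1 \<open>h1 (ex p) = d\<close> by auto
  moreover have "\<forall>w. w \<notin> ex ` under p \<longrightarrow> h2 w = h w"
  proof (intro allI impI)
    fix w assume w: "w \<notin> ex ` under p"
    hence w0: "w \<notin> ex ` under (0#p)" and w1: "w \<notin> ex ` under (1#p)" using u0 u1 by blast+
    have "w \<noteq> ex p" using w pu by blast
    have "h2 w = h1 w" using h2(1) w1 by blast
    also have "h1 w = h0 w" using h1(1) w0 by blast
    also have "h0 w = h w" using \<open>w \<noteq> ex p\<close> h0_def by simp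
    finally show "h2 w = h w" .
  qed
  ultimately show ?case using A h2 dS by (intro exI[of _ h2]) auto
qed

lemma relpow_mono_sub: "(R::('a\<times>'a) set) \<subseteq> S \<Longrightarrow> R ^^ n \<subseteq> S ^^ n"
proof (induction n)
  case 0 then show ?case by (metis order_refl relpow.simps(1))
next
  case (Suc n) thus ?case using relcomp_mono[OF Suc.IH Suc.prems] by (simp only: relpow.simps)
qed

lemma relpow_sub_sq: "R \<subseteq> C \<times> C \<Longrightarrow> R ^^ Suc n \<subseteq> C \<times> C"
  by (induction n) auto

lemma relpow_refl: "Id_on C \<subseteq> R \<Longrightarrow> Id_on C \<subseteq> R ^^ Suc n"
proof (induction n)
  case 0 then show ?case by simp
next
  case (Suc n)
  show ?case
  proof
    fix z assume "z \<in> Id_on C"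
    then obtain x where x: "z = (x, x)" "x \<in> C" by (auto simp: Id_on_def)
    have "(x, x) \<in> R ^^ Suc n" using Suc x by auto
    moreover have "(x, x) \<in> R" using Suc.prems x by auto
    ultimately have "(x, x) \<in> R ^^ Suc n O R" by (rule relcompI)
    thus "z \<in> R ^^ Suc (Suc n)" using x by (simp only: relpow.simps)
  qed
qed

lemma relpow_grow:
  assumes "R \<subseteq> C \<times> C" "Id_on C \<subseteq> R" "0 < n" "n \<le> m"
  shows "R ^^ n \<subseteq> R ^^ m"
proof (cases "n = m")
  case True then show ?thesis by simp
next
  case False
  define k where "k = m - n - 1"
  have m: "m = n + Suc k" using False assms(4) unfolding k_def by simp
  define n' where "n' = n - 1"
  have n: "n = Suc n'" using assms(3) unfolding n'_def by simp
  have "R ^^ n \<subseteq> C \<times> C" using relpow_sub_sq[OF assms(1)] n by simp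
  moreover have "Id_on C \<subseteq> R ^^ Suc k" using relpow_refl[OF assms(2)] .
  ultimately have "R ^^ n \<subseteq> R ^^ n O R ^^ Suc k"
  proof -
    assume s1: "R ^^ n \<subseteq> C \<times> C" and s2: "Id_on C \<subseteq> R ^^ Suc k"
    show ?thesis
    proof
      fix z assume z: "z \<in> R ^^ n"
      then obtain a b where ab: "z = (a, b)" "b \<in> C" using s1 by blast
      have "(b, b) \<in> R ^^ Suc k" using s2 ab(2) by (auto simp: Id_on_def simp del: relpow.simps)
      thus "z \<in> R ^^ n O R ^^ Suc k" using z ab(1) by (meson relcompI)
    qed
  qed
  also have "\<dots> = R ^^ m" unfolding m by (rule relpow_add[symmetric])
  finally show ?thesis .
qed

lemma join_pow:
  assumes fin: "finite C" and AB: "A \<subseteq> C \<times> C" "B \<subseteq> C \<times> C" "Id_on C \<subseteq> A" "Id_on C \<subseteq> B"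
    and M: "card (C \<times> C) \<le> M"
  shows "(A O B) ^^ Suc M = (A \<union> B)\<^sup>+"
proof
  have s1: "A O B \<subseteq> (A \<union> B)\<^sup>+"
  proof
    fix z assume "z \<in> A O B"
    then obtain a b c where z: "z = (a, c)" "(a, b) \<in> A" "(b, c) \<in> B" by blast
    have "(a, b) \<in> (A \<union> B)\<^sup>+" using z(2) by (simp add: r_into_trancl')
    moreover have "(b, c) \<in> A \<union> B" using z(3) by simp
    ultimately show "z \<in> (A \<union> B)\<^sup>+" using z(1) by (simp add: trancl_into_trancl)
  qed
  have "(A O B)\<^sup>+ \<subseteq> (A \<union> B)\<^sup>+"
  proof
    fix z assume "z \<in> (A O B)\<^sup>+"
    hence "z \<in> ((A \<union> B)\<^sup>+)\<^sup>+" using trancl_mono s1 by blast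
    thus "z \<in> (A \<union> B)\<^sup>+" by simp
  qed
  moreover have "(A O B) ^^ Suc M \<subseteq> (A O B)\<^sup>+" using trancl_power by blast
  ultimately show "(A O B) ^^ Suc M \<subseteq> (A \<union> B)\<^sup>+" by blast
next
  let ?X = "A \<union> B"
  have Xs: "?X \<subseteq> C \<times> C" "Id_on C \<subseteq> ?X" using AB by auto
  have fCC: "finite (C \<times> C)" using fin by simp
  have finX: "finite ?X" using finite_subset[OF Xs(1) fCC] .
  have "card ?X \<le> card (C \<times> C)" using card_mono[OF fCC Xs(1)] .
  hence cX: "card ?X \<le> M" using M by linarith
  have "?X\<^sup>+ \<subseteq> ?X ^^ Suc M"
  proof
    fix z assume "z \<in> ?X\<^sup>+"
    then obtain n where n: "0 < n" "n \<le> card ?X" "z \<in> ?X ^^ n"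
      using trancl_finite_eq_relpow[OF finX] by blast
    have "n \<le> Suc M" using n(2) cX by linarith
    thus "z \<in> ?X ^^ Suc M" using relpow_grow[OF Xs n(1)] n(3) by blast
  qed
  also have "?X \<subseteq> A O B"
  proof
    fix z assume z: "z \<in> ?X"
    then obtain a b where ab: "z = (a, b)" "a \<in> C" "b \<in> C" using Xs(1) by blast
    have "(a, a) \<in> A" "(b, b) \<in> B" using ab AB(3,4) by auto
    thus "z \<in> A O B" using z ab by blast
  qed
  hence "?X ^^ Suc M \<subseteq> (A O B) ^^ Suc M" by (rule relpow_mono_sub)
  finally show "?X\<^sup>+ \<subseteq> (A O B) ^^ Suc M" .
qed

fun rpow :: "nat \<Rightarrow> 'w rexp \<Rightarrow> 'w rexp" where
  "rpow 0 x = x"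
| "rpow (Suc n) x = RComp x (rpow n x)"

lemma rsem_rpow: "rsem \<rho> (rpow n x) = (rsem \<rho> x) ^^ Suc n"
proof (induction n)
  case 0 then show ?case by simp
next
  case (Suc n)
  have "rsem \<rho> (rpow (Suc n) x) = rsem \<rho> x O (rsem \<rho> x) ^^ Suc n" using Suc by simp
  also have "\<dots> = (rsem \<rho> x) ^^ Suc n O rsem \<rho> x" by (rule relpow_commute)
  also have "\<dots> = (rsem \<rho> x) ^^ Suc (Suc n)" by (simp only: relpow.simps)
  finally show ?case .
qed

lemma anames_rpow: "anames (rpow n x) = anames x"
  by (induction n) auto


lemma alpha_sub: "alpha_b P al ga b \<subseteq> (P // ga) \<times> (P // ga)"
  unfolding alpha_b_def by auto

lemma alpha_refl:
  assumes "pentagon P al be ga" "b \<in> P // be" "c \<in> P // ga"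
  shows "(c, c) \<in> alpha_b P al ga b"
proof -
  from assms have eq: "equiv P al" "equiv P be" "equiv P ga" "be O ga = P \<times> P"
    unfolding pentagon_def by auto
  obtain x where x: "x \<in> P" "b = be `` {x}" using assms(2) unfolding quotient_def by blast
  obtain z where z: "z \<in> P" "c = ga `` {z}" using assms(3) unfolding quotient_def by blast
  have "(x, z) \<in> be O ga" using eq(4) x z by auto
  then obtain q where q: "(x, q) \<in> be" "(q, z) \<in> ga" by blast
  have "(z, q) \<in> ga" using q(2) eq(3) unfolding equiv_def sym_def by blast
  hence qc: "q \<in> c" using z by auto
  have qb: "q \<in> b" using q(1) x by auto
  have "q \<in> P" using q(1) eq(2) unfolding equiv_def refl_on_def by blast
  hence "(q, q) \<in> al" using eq(1) unfolding equiv_def refl_on_def by blast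
  thus ?thesis unfolding alpha_b_def using qc qb assms(3) by blast
qed

lemma alpha_trans:
  assumes "pentagon P al be ga" "b \<in> P // be"
  shows "trans (alpha_b P al ga b)"
proof (rule transI)
  from assms have eq: "equiv P al" "equiv P be" "equiv P ga" "be \<inter> ga = Id_on P"
    unfolding pentagon_def by auto
  fix c1 c2 c3 assume a1: "(c1, c2) \<in> alpha_b P al ga b" and a2: "(c2, c3) \<in> alpha_b P al ga b"
  from a1 obtain p1 p2 where p: "p1 \<in> b \<inter> c1" "p2 \<in> b \<inter> c2" "(p1, p2) \<in> al" "c1 \<in> P // ga"
    unfolding alpha_b_def by blast
  from a2 obtain q2 q3 where q: "q2 \<in> b \<inter> c2" "q3 \<in> b \<inter> c3" "(q2, q3) \<in> al" "c2 \<in> P // ga" "c3 \<in> P // ga"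
    unfolding alpha_b_def by blast
  have "(p2, q2) \<in> be" using p(2) q(1) assms(2) quotient_eq_iff[OF eq(2) assms(2) assms(2)]
    by (meson IntD1 eq(2) quotient_eq_iff)
  moreover have "(p2, q2) \<in> ga" using p(2) q(1) q(4) by (meson IntD2 eq(3) quotient_eq_iff)
  ultimately have "(p2, q2) \<in> Id_on P" using eq(4) by blast
  hence "p2 = q2" by (auto simp: Id_on_def)
  hence "(p1, q3) \<in> al" using p(3) q(3) eq(1) unfolding equiv_def trans_def by blast
  thus "(c1, c3) \<in> alpha_b P al ga b" unfolding alpha_b_def using p q by blast
qed

lemma LP_props:
  assumes "pentagon P al be ga" "m \<in> LP P al be ga"
  shows "m \<subseteq> (P // ga) \<times> (P // ga) \<and> Id_on (P // ga) \<subseteq> m \<and> trans m"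
  using assms(2)
proof (induction rule: LP.induct)
  case (gen b)
  have "alpha_b P al ga b \<subseteq> (P // ga) \<times> (P // ga)" by (rule alpha_sub)
  moreover have "Id_on (P // ga) \<subseteq> alpha_b P al ga b"
    using alpha_refl[OF assms(1) gen] by (auto simp: Id_on_def)
  moreover have "trans (alpha_b P al ga b)" by (rule alpha_trans[OF assms(1) gen])
  ultimately show ?case by blast
next
  case (meet x y)
  have "x \<inter> y \<subseteq> (P // ga) \<times> (P // ga)" using meet.IH by blast
  moreover have "Id_on (P // ga) \<subseteq> x \<inter> y" using meet.IH by blast
  moreover have "trans (x \<inter> y)" using meet.IH by (simp add: trans_Int)
  ultimately show ?case by blast
next
  case (join x y)
  have "(x \<union> y)\<^sup>+ \<subseteq> (P // ga) \<times> (P // ga)" using join.IH by (intro trancl_subset_Sigma) blast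
  moreover have "x \<subseteq> (x \<union> y)\<^sup>+"
  proof
    fix z assume "z \<in> x" hence "z \<in> x \<union> y" by blast
    thus "z \<in> (x \<union> y)\<^sup>+" by (rule r_into_trancl')
  qed
  hence "Id_on (P // ga) \<subseteq> (x \<union> y)\<^sup>+" using join.IH by blast
  moreover have "trans ((x \<union> y)\<^sup>+)" by (rule trans_trancl)
  ultimately show ?case by blast
qed

lemma finite_C: assumes "pentagon P al be ga" shows "finite (P // ga)"
proof -
  have "finite P" "equiv P ga" using assms unfolding pentagon_def by blast+
  thus ?thesis using finite_quotient equiv_type by blast
qed

lemma finite_LP:
  assumes "pentagon P al be ga"
  shows "finite (LP P al be ga)"
proof -
  have "LP P al be ga \<subseteq> Pow ((P // ga) \<times> (P // ga))" using LP_props[OF assms] by blast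
  moreover have "finite (Pow ((P // ga) \<times> (P // ga)))" using finite_C[OF assms] by simp
  ultimately show ?thesis by (rule finite_subset)
qed

fun uval :: "'a set \<Rightarrow> ('a \<times> 'a) set \<Rightarrow> ('a \<times> 'a) set \<Rightarrow> nat \<Rightarrow> (nat \<Rightarrow> 'a set) \<Rightarrow> 'a crel" where
  "uval P al ga 0 p = alpha_b P al ga (p 0)"
| "uval P al ga (Suc n) p = ((uval P al ga n (\<lambda>i. p (4*i)) \<inter> uval P al ga n (\<lambda>i. p (4*i+1))) \<union>
      (uval P al ga n (\<lambda>i. p (4*i+2)) \<inter> uval P al ga n (\<lambda>i. p (4*i+3))))\<^sup>+"

lemma idx_bound: "(i::nat) < 4^n \<Longrightarrow> j < 4 \<Longrightarrow> 4*i+j < 4^Suc n"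
  by simp

lemma uval_cong: "(\<forall>i<4^n. p i = q i) \<Longrightarrow> uval P al ga n p = uval P al ga n q"
proof (induction n arbitrary: p q)
  case 0 then show ?case by simp
next
  case (Suc n)
  have c: "\<And>j. j < 4 \<Longrightarrow> uval P al ga n (\<lambda>i. p (4*i+j)) = uval P al ga n (\<lambda>i. q (4*i+j))"
  proof -
    fix j :: nat assume j: "j < 4"
    show "uval P al ga n (\<lambda>i. p (4*i+j)) = uval P al ga n (\<lambda>i. q (4*i+j))"
      using Suc.IH[of "\<lambda>i. p (4*i+j)" "\<lambda>i. q (4*i+j)"] Suc.prems idx_bound[OF _ j, of _ n] by blast
  qed
  show ?case using c[of 0] c[of 1] c[of 2] c[of 3] by simp
qed

lemma uval_LP:
  "(\<forall>i<4^n. p i \<in> P // be) \<Longrightarrow> uval P al ga n p \<in> LP P al be ga"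
proof (induction n arbitrary: p)
  case 0 then show ?case by (simp add: LP.gen)
next
  case (Suc n)
  have c: "\<And>j. j < 4 \<Longrightarrow> uval P al ga n (\<lambda>i. p (4*i+j)) \<in> LP P al be ga"
  proof -
    fix j :: nat assume j: "j < 4"
    show "uval P al ga n (\<lambda>i. p (4*i+j)) \<in> LP P al be ga"
      using Suc.IH[of "\<lambda>i. p (4*i+j)"] Suc.prems idx_bound[OF _ j, of _ n] by blast
  qed
  show ?case using c[of 0] c[of 1] c[of 2] c[of 3] by (simp add: LP.meet LP.join)
qed

definition comb :: "(nat \<Rightarrow> 'b) \<Rightarrow> (nat \<Rightarrow> 'b) \<Rightarrow> (nat \<Rightarrow> 'b) \<Rightarrow> (nat \<Rightarrow> 'b) \<Rightarrow> nat \<Rightarrow> 'b" where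
  "comb p0 p1 p2 p3 x = (if x mod 4 = 0 then p0 (x div 4) else if x mod 4 = 1 then p1 (x div 4)
     else if x mod 4 = 2 then p2 (x div 4) else p3 (x div 4))"

lemma comb_0: "(\<lambda>i. comb p0 p1 p2 p3 (4*i)) = p0"
proof
  fix i :: nat
  have h: "(4*i) mod 4 = 0 \<and> (4*i) div 4 = i" by presburger
  show "comb p0 p1 p2 p3 (4*i) = p0 i" unfolding comb_def using h by simp
qed
lemma comb_1: "(\<lambda>i. comb p0 p1 p2 p3 (4*i+1)) = p1"
proof
  fix i :: nat
  have h: "(4*i+1) mod 4 = 1 \<and> (4*i+1) div 4 = i" by presburger
  show "comb p0 p1 p2 p3 (4*i+1) = p1 i" unfolding comb_def using h by simp
qed
lemma comb_2: "(\<lambda>i. comb p0 p1 p2 p3 (4*i+2)) = p2"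
proof
  fix i :: nat
  have h: "(4*i+2) mod 4 = 2 \<and> (4*i+2) div 4 = i" by presburger
  show "comb p0 p1 p2 p3 (4*i+2) = p2 i" unfolding comb_def using h by simp
qed
lemma comb_3: "(\<lambda>i. comb p0 p1 p2 p3 (4*i+3)) = p3"
proof
  fix i :: nat
  have h: "(4*i+3) mod 4 = 3 \<and> (4*i+3) div 4 = i" by presburger
  show "comb p0 p1 p2 p3 (4*i+3) = p3 i" unfolding comb_def using h by simp
qed

lemma uval_comb: "uval P al ga (Suc n) (comb p0 p1 p2 p3) =
   ((uval P al ga n p0 \<inter> uval P al ga n p1) \<union> (uval P al ga n p2 \<inter> uval P al ga n p3))\<^sup>+"
  by (simp only: uval.simps comb_0 comb_1 comb_2 comb_3)

lemma comb_in: "\<forall>i. p0 i \<in> S \<Longrightarrow> \<forall>i. p1 i \<in> S \<Longrightarrow> \<forall>i. p2 i \<in> S \<Longrightarrow> \<forall>i. p3 i \<in> S \<Longrightarrow> \<forall>i. comb p0 p1 p2 p3 i \<in> S"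
  by (simp add: comb_def)

definition rep :: "'a set \<Rightarrow> ('a \<times> 'a) set \<Rightarrow> ('a \<times> 'a) set \<Rightarrow> ('a \<times> 'a) set \<Rightarrow> nat \<Rightarrow> 'a crel \<Rightarrow> bool" where
  "rep P al be ga n m \<longleftrightarrow> (\<exists>p. (\<forall>i. p i \<in> P // be) \<and> uval P al ga n p = m)"

lemma rep_Suc:
  assumes "rep P al be ga n m" "trans m"
  shows "rep P al be ga (Suc n) m"
proof -
  obtain p where p: "\<forall>i. p i \<in> P // be" "uval P al ga n p = m" using assms(1) unfolding rep_def by blast
  have "uval P al ga (Suc n) (comb p p p p) = ((m \<inter> m) \<union> (m \<inter> m))\<^sup>+" by (simp only: uval_comb p(2))
  also have "\<dots> = m\<^sup>+" by simp
  also have "\<dots> = m" using assms(2) by (rule trancl_id)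
  finally show ?thesis unfolding rep_def using comb_in[OF p(1) p(1) p(1) p(1)] by blast
qed

lemma rep_mono:
  assumes "pentagon P al be ga" "m \<in> LP P al be ga" "rep P al be ga n m" "n \<le> k"
  shows "rep P al be ga k m"
  using assms(4,3)
proof (induction k rule: dec_induct)
  case base then show ?case by simp
next
  case (step k)
  then show ?case using rep_Suc LP_props[OF assms(1,2)] by blast
qed

lemma rep_LP:
  assumes "pentagon P al be ga" "m \<in> LP P al be ga"
  shows "\<exists>n. rep P al be ga n m"
  using assms(2)
proof (induction rule: LP.induct)
  case (gen b)
  have "rep P al be ga 0 (alpha_b P al ga b)" unfolding rep_def using gen by (intro exI[of _ "\<lambda>_. b"]) simp
  then show ?case by blast
next
  case (meet x y)
  obtain n1 n2 where n: "rep P al be ga n1 x" "rep P al be ga n2 y" using meet.IH by blast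
  have "rep P al be ga (max n1 n2) x" "rep P al be ga (max n1 n2) y"
    using rep_mono[OF assms(1) meet.hyps(1) n(1)] rep_mono[OF assms(1) meet.hyps(2) n(2)] by auto
  then obtain p q where p: "\<forall>i. p i \<in> P // be" "uval P al ga (max n1 n2) p = x"
    and q: "\<forall>i. q i \<in> P // be" "uval P al ga (max n1 n2) q = y" unfolding rep_def by blast
  have "uval P al ga (Suc (max n1 n2)) (comb p q p q) = ((x \<inter> y) \<union> (x \<inter> y))\<^sup>+" by (simp only: uval_comb p(2) q(2))
  also have "\<dots> = (x \<inter> y)\<^sup>+" by simp
  also have "\<dots> = x \<inter> y" using LP_props[OF assms(1) LP.meet[OF meet.hyps]] trancl_id by blast
  finally show ?case unfolding rep_def using comb_in[OF p(1) q(1) p(1) q(1)] by blast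
next
  case (join x y)
  obtain n1 n2 where n: "rep P al be ga n1 x" "rep P al be ga n2 y" using join.IH by blast
  have "rep P al be ga (max n1 n2) x" "rep P al be ga (max n1 n2) y"
    using rep_mono[OF assms(1) join.hyps(1) n(1)] rep_mono[OF assms(1) join.hyps(2) n(2)] by auto
  then obtain p q where p: "\<forall>i. p i \<in> P // be" "uval P al ga (max n1 n2) p = x"
    and q: "\<forall>i. q i \<in> P // be" "uval P al ga (max n1 n2) q = y" unfolding rep_def by blast
  have "uval P al ga (Suc (max n1 n2)) (comb p p q q) = ((x \<inter> x) \<union> (y \<inter> y))\<^sup>+"
    by (simp only: uval_comb p(2) q(2))
  also have "\<dots> = (x \<union> y)\<^sup>+" by simp
  finally show ?case unfolding rep_def using comb_in[OF p(1) p(1) q(1) q(1)] by blast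
qed

lemma rep_all:
  assumes "pentagon P al be ga"
  shows "\<exists>N. \<forall>m \<in> LP P al be ga. rep P al be ga N m"
proof -
  have "\<And>F. finite F \<Longrightarrow> F \<subseteq> LP P al be ga \<Longrightarrow> \<exists>N. \<forall>m \<in> F. rep P al be ga N m"
  proof -
    fix F :: "'a crel set"
    show "finite F \<Longrightarrow> F \<subseteq> LP P al be ga \<Longrightarrow> \<exists>N. \<forall>m \<in> F. rep P al be ga N m"
    proof (induction F rule: finite_induct)
      case empty then show ?case by simp
    next
      case (insert x F)
      then obtain N where N: "\<forall>m \<in> F. rep P al be ga N m" by blast
      obtain n where n: "rep P al be ga n x" using rep_LP[OF assms] insert.prems by blast
      have "\<forall>m \<in> insert x F. rep P al be ga (max N n) m"
      proof
        fix m assume m: "m \<in> insert x F"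
        show "rep P al be ga (max N n) m"
        proof (cases "m = x")
          case True then show ?thesis using rep_mono[OF assms _ n] insert.prems by auto
        next
          case False
          hence "m \<in> F" using m by simp
          hence "rep P al be ga N m" "m \<in> LP P al be ga" using N insert.prems by auto
          then show ?thesis using rep_mono[OF assms, of m N "max N n"] by simp
        qed
      qed
      then show ?case by blast
    qed
  qed
  from this[OF finite_LP[OF assms]] show ?thesis by blast
qed

definition Rel :: "'a set \<Rightarrow> ('a \<times> 'a) set \<Rightarrow> ('a \<times> 'a) set \<Rightarrow> ('a \<times> 'a) set \<Rightarrow> 'a set \<Rightarrow> 'a crel" where
  "Rel P al be ga b = (if b \<in> P // be then alpha_b P al ga b else {})"

lemma pR_Rel: "pR P al be ga b c c' \<longleftrightarrow> (c, c') \<in> Rel P al be ga b"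
  unfolding pR_def Rel_def alpha_b_def by auto

lemma Rel_sub: "Rel P al be ga b \<subseteq> (P // ga) \<times> (P // ga)"
  unfolding Rel_def using alpha_sub[of P al ga b] by auto

fun uexp :: "nat \<Rightarrow> nat \<Rightarrow> (nat \<Rightarrow> 'w) \<Rightarrow> 'w rexp" where
  "uexp M 0 \<sigma> = RAtom (\<sigma> 0)"
| "uexp M (Suc n) \<sigma> = rpow M (RComp (RMeet (uexp M n (\<lambda>i. \<sigma> (4*i))) (uexp M n (\<lambda>i. \<sigma> (4*i+1))))
                                   (RMeet (uexp M n (\<lambda>i. \<sigma> (4*i+2))) (uexp M n (\<lambda>i. \<sigma> (4*i+3)))))"

fun cexp :: "nat \<Rightarrow> nat \<Rightarrow> 'v circ \<Rightarrow> ('v \<times> nat) rexp" where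
  "cexp M N (CVar v) = uexp M N (\<lambda>i. (v, 3*i))"
| "cexp M N (CMeet a b) = RMeet (cexp M N a) (cexp M N b)"
| "cexp M N (CJoin a b) = rpow M (RComp (cexp M N a) (cexp M N b))"

lemma anames_uexp: "anames (uexp M n \<sigma>) \<subseteq> \<sigma> ` {..<4^n}"
proof (induction n arbitrary: \<sigma>)
  case 0 then show ?case by simp
next
  case (Suc n)
  have c: "\<And>j. j < 4 \<Longrightarrow> anames (uexp M n (\<lambda>i. \<sigma> (4*i+j))) \<subseteq> \<sigma> ` {..<4^Suc n}"
  proof -
    fix j :: nat assume j: "j < 4"
    have "anames (uexp M n (\<lambda>i. \<sigma> (4*i+j))) \<subseteq> (\<lambda>i. \<sigma> (4*i+j)) ` {..<4^n}" by (rule Suc.IH)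
    also have "\<dots> \<subseteq> \<sigma> ` {..<4^Suc n}" using idx_bound[OF _ j, of _ n] by auto
    finally show "anames (uexp M n (\<lambda>i. \<sigma> (4*i+j))) \<subseteq> \<sigma> ` {..<4^Suc n}" .
  qed
  show ?case using c[of 0] c[of 1] c[of 2] c[of 3] by (simp add: anames_rpow)
qed

lemma anames_cexp: "anames (cexp M N c) \<subseteq> {(v, 3*i) | v i. v \<in> circ_vars c \<and> i < 4^N}"
proof (induction c)
  case (CVar v)
  then show ?case using anames_uexp[of M N "\<lambda>i. (v, 3*i)"] by auto
next
  case (CMeet a b) then show ?case by auto
next
  case (CJoin a b) then show ?case by (auto simp: anames_rpow)
qed

lemma circ_eval_cong: "(\<forall>v \<in> circ_vars c. f v = g v) \<Longrightarrow> circ_eval f c = circ_eval g c"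
  by (induction c) auto

lemma circ_eval_LP: "(\<forall>v \<in> circ_vars c. f v \<in> LP P al be ga) \<Longrightarrow> circ_eval f c \<in> LP P al be ga"
  by (induction c) (auto intro: LP.meet LP.join)

context
  fixes P :: "'a set" and al be ga :: "('a \<times> 'a) set" and M :: nat
  assumes pent: "pentagon P al be ga" and Mbig: "card ((P // ga) \<times> (P // ga)) \<le> M"
begin

lemma join_LP:
  assumes "x \<in> LP P al be ga" "y \<in> LP P al be ga"
  shows "(x O y) ^^ Suc M = (x \<union> y)\<^sup>+"
  using LP_props[OF pent assms(1)] LP_props[OF pent assms(2)]
  by (intro join_pow[OF finite_C[OF pent] _ _ _ _ Mbig]) auto

lemma rsem_uexp:
  "(\<forall>i<4^n. h (\<sigma> i) \<in> P // be) \<Longrightarrow>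
     rsem (\<lambda>x. Rel P al be ga (h x)) (uexp M n \<sigma>) = uval P al ga n (\<lambda>i. h (\<sigma> i))"
proof (induction n arbitrary: \<sigma>)
  case 0 then show ?case by (simp add: Rel_def)
next
  case (Suc n)
  let ?u = "\<lambda>j. uval P al ga n (\<lambda>i. h (\<sigma> (4*i+j)))"
  have c: "\<And>j. j < 4 \<Longrightarrow> rsem (\<lambda>x. Rel P al be ga (h x)) (uexp M n (\<lambda>i. \<sigma> (4*i+j))) = ?u j \<and> ?u j \<in> LP P al be ga"
  proof -
    fix j :: nat assume j: "j < 4"
    have pr: "\<forall>i<4^n. h (\<sigma> (4*i+j)) \<in> P // be" using Suc.prems idx_bound[OF _ j, of _ n] by blast
    show "rsem (\<lambda>x. Rel P al be ga (h x)) (uexp M n (\<lambda>i. \<sigma> (4*i+j))) = ?u j \<and> ?u j \<in> LP P al be ga"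
      using Suc.IH[OF pr] uval_LP[OF pr] by simp
  qed
  have e0: "rsem (\<lambda>x. Rel P al be ga (h x)) (uexp M n (\<lambda>i. \<sigma> (4*i))) = ?u 0 \<and> ?u 0 \<in> LP P al be ga"
    using c[of 0] by simp
  have e1: "rsem (\<lambda>x. Rel P al be ga (h x)) (uexp M n (\<lambda>i. \<sigma> (4*i+1))) = ?u 1 \<and> ?u 1 \<in> LP P al be ga"
    using c[of 1] by simp
  have e2: "rsem (\<lambda>x. Rel P al be ga (h x)) (uexp M n (\<lambda>i. \<sigma> (4*i+2))) = ?u 2 \<and> ?u 2 \<in> LP P al be ga"
    using c[of 2] by simp
  have e3: "rsem (\<lambda>x. Rel P al be ga (h x)) (uexp M n (\<lambda>i. \<sigma> (4*i+3))) = ?u 3 \<and> ?u 3 \<in> LP P al be ga"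
    using c[of 3] by simp
  have "rsem (\<lambda>x. Rel P al be ga (h x)) (uexp M (Suc n) \<sigma>) = ((?u 0 \<inter> ?u 1) O (?u 2 \<inter> ?u 3)) ^^ Suc M"
    using e0 e1 e2 e3 by (simp only: uexp.simps rsem_rpow rsem.simps)
  also have "\<dots> = ((?u 0 \<inter> ?u 1) \<union> (?u 2 \<inter> ?u 3))\<^sup>+"
    using e0 e1 e2 e3 by (intro join_LP LP.meet) auto
  also have "\<dots> = uval P al ga (Suc n) (\<lambda>i. h (\<sigma> i))" by simp
  finally show ?case .
qed

lemma rsem_cexp:
  "(\<forall>v \<in> circ_vars c. \<forall>i<4^N. h (v, 3*i) \<in> P // be) \<Longrightarrow>
     rsem (\<lambda>x. Rel P al be ga (h x)) (cexp M N c) = circ_eval (\<lambda>v. uval P al ga N (\<lambda>i. h (v, 3*i))) c \<and>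
     circ_eval (\<lambda>v. uval P al ga N (\<lambda>i. h (v, 3*i))) c \<in> LP P al be ga"
proof (induction c)
  case (CVar v)
  then show ?case using rsem_uexp[of N h "\<lambda>i. (v, 3*i)"] uval_LP[of N "\<lambda>i. h (v, 3*i)"] by simp
next
  case (CMeet a b)
  then show ?case by (auto intro: LP.meet)
next
  case (CJoin a b)
  then have a: "rsem (\<lambda>x. Rel P al be ga (h x)) (cexp M N a) = circ_eval (\<lambda>v. uval P al ga N (\<lambda>i. h (v, 3*i))) a"
    "circ_eval (\<lambda>v. uval P al ga N (\<lambda>i. h (v, 3*i))) a \<in> LP P al be ga"
    and b: "rsem (\<lambda>x. Rel P al be ga (h x)) (cexp M N b) = circ_eval (\<lambda>v. uval P al ga N (\<lambda>i. h (v, 3*i))) b"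
    "circ_eval (\<lambda>v. uval P al ga N (\<lambda>i. h (v, 3*i))) b \<in> LP P al be ga" by auto
  show ?case using join_LP[OF a(2) b(2)] a b by (simp add: rsem_rpow LP.join)
qed

end

definition exn :: "'v \<Rightarrow> nat list \<Rightarrow> 'v \<times> nat" where "exn v0 q = (v0, 3 * list_encode q + 2)"
definition kn :: "'v \<Rightarrow> nat \<Rightarrow> 'v \<times> nat" where "kn v0 j = (v0, 3 * j + 1)"
definition prs :: "'b list \<Rightarrow> ('b \<times> 'b) set \<Rightarrow> (nat \<times> nat) list" where
  "prs cs ell = [(i, j). i \<leftarrow> [0..<length cs], j \<leftarrow> [0..<length cs], (cs ! i, cs ! j) \<in> ell]"

lemma set_prs: "set (prs cs ell) = {(i, j). i < length cs \<and> j < length cs \<and> (cs ! i, cs ! j) \<in> ell}"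
  unfolding prs_def by auto

lemma inj_exn: "inj (exn v0)"
  unfolding exn_def inj_def using inj_list_encode[of UNIV] by (auto dest: injD)

lemma exn_mod: "snd (exn v0 q) mod 3 = 2" unfolding exn_def snd_conv by presburger
lemma kn_mod: "snd (kn v0 j) mod 3 = 1" unfolding kn_def snd_conv by presburger

definition mk_inst :: "nat \<Rightarrow> nat \<Rightarrow> 'a set list \<Rightarrow> ('v, 'a) lat_inst \<Rightarrow> ('v \<times> nat) pent_inst" where
  "mk_inst M N cs I =
    \<lparr>PX = (\<lambda>(v, i). (v, 3 * i)) ` (LV I \<times> {..<4^N}),
     PY = kn (SOME v. v \<in> LV I) ` {..<length cs},
     PEX = {},
     PEY = (\<Union>n < length (prs cs (Lell I)). exn (SOME v. v \<in> LV I) ` exps (cexp M N (LC I)) [n]),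
     Patoms = concat (map (\<lambda>n. ratoms (exn (SOME v. v \<in> LV I)) (cexp M N (LC I))
                 (kn (SOME v. v \<in> LV I) (fst (prs cs (Lell I) ! n)))
                 (kn (SOME v. v \<in> LV I) (snd (prs cs (Lell I) ! n))) [n]) [0..<length (prs cs (Lell I))]),
     Pw = (\<lambda>(v, n). if n mod 3 = 0 then Lw I v / (2 * 4^N) else if n mod 3 = 1 then 1 / (2 * real (length cs)) else 0)\<rparr>"

definition mk_dec :: "'a set list \<Rightarrow> ('a crel \<Rightarrow> nat \<Rightarrow> 'a set) \<Rightarrow> ('v \<Rightarrow> 'a crel) \<Rightarrow> 'v \<times> nat \<Rightarrow> 'a set" where
  "mk_dec cs enc f w = (if snd w mod 3 = 0 then enc (f (fst w)) (snd w div 3) else cs ! (snd w div 3))"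

lemma kn_notin_exn: "kn v j \<notin> exn u ` A"
proof
  assume "kn v j \<in> exn u ` A" then obtain q where "kn v j = exn u q" by blast
  hence "snd (kn v j) mod 3 = snd (exn u q) mod 3" by simp
  thus False using kn_mod[of v j] exn_mod[of u q] by simp
qed

lemma LP_nonempty: "m \<in> LP P al be ga \<Longrightarrow> P // be \<noteq> {}"
  by (induction rule: LP.induct) auto

locale constr =
  fixes P :: "'a set" and al be ga :: "('a \<times> 'a) set" and M N :: nat and cs :: "'a set list"
    and enc :: "'a crel \<Rightarrow> nat \<Rightarrow> 'a set" and D :: real
  assumes pent: "pentagon P al be ga" and Mbig: "card ((P // ga) \<times> (P // ga)) \<le> M"
    and cs: "set cs = P // ga" "distinct cs"
    and enc: "\<And>m. m \<in> LP P al be ga \<Longrightarrow> (\<forall>i. enc m i \<in> P // be) \<and> uval P al ga N (enc m) = m"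
begin

context
  fixes I :: "('v, 'a) lat_inst"
  assumes vI: "lat_valid (LP P al be ga) D I"
begin

definition "v0 = (SOME v. v \<in> LV I)"
definition "E = cexp M N (LC I)"
definition "ps = prs cs (Lell I)"
definition "I' = (mk_inst M N cs I :: ('v \<times> nat) pent_inst)"

lemma finLV: "finite (LV I)" using vI unfolding lat_valid_def by blast

lemma LVne: "LV I \<noteq> {}"
proof
  assume "LV I = {}"
  hence "sum (Lw I) (LV I) = 0" by simp
  thus False using vI unfolding lat_valid_def by simp
qed

lemma v0_in: "v0 \<in> LV I" unfolding v0_def using LVne by (simp add: some_in_eq)

lemma ell_LP: "Lell I \<in> LP P al be ga" using vI unfolding lat_valid_def by blast

lemma K_pos: "0 < length cs"
proof -
  have "P // be \<noteq> {}" using LP_nonempty[OF ell_LP] .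
  hence "P \<noteq> {}" by simp
  hence "P // ga \<noteq> {}" by simp
  thus ?thesis using cs(1) by auto
qed

lemma cvars: "circ_vars (LC I) \<subseteq> LV I" using vI unfolding lat_valid_def by blast

lemma PX_I': "PX I' = {(v, 3 * i) | v i. v \<in> LV I \<and> i < 4^N}"
  unfolding I'_def mk_inst_def by auto

lemma PY_I': "PY I' = kn v0 ` {..<length cs}"
  unfolding I'_def mk_inst_def v0_def by simp

lemma PEX_I': "PEX I' = {}"
  unfolding I'_def mk_inst_def by simp

lemma PEY_I': "PEY I' = (\<Union>n < length ps. exn v0 ` exps E [n])"
  unfolding I'_def mk_inst_def v0_def E_def ps_def by simp

lemma atoms_I': "set (Patoms I') = (\<Union>n < length ps. set (ratoms (exn v0) E (kn v0 (fst (ps ! n))) (kn v0 (snd (ps ! n))) [n]))"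
  unfolding I'_def mk_inst_def v0_def E_def ps_def by auto

lemma Pw_I': "Pw I' = (\<lambda>(v, n). if n mod 3 = 0 then Lw I v / (2 * 4^N) else if n mod 3 = 1 then 1 / (2 * real (length cs)) else 0)"
  unfolding I'_def mk_inst_def by simp

lemma PX_mod: "w \<in> PX I' \<Longrightarrow> snd w mod 3 = 0" using PX_I' by auto
lemma PY_mod: "w \<in> PY I' \<Longrightarrow> snd w mod 3 = 1" using PY_I' kn_mod by auto
lemma PEY_mod: "w \<in> PEY I' \<Longrightarrow> snd w mod 3 = 2" using PEY_I' exn_mod by auto

lemma finPX: "finite (PX I')" unfolding I'_def mk_inst_def using finLV by simp
lemma finPY: "finite (PY I')" using PY_I' by simp
lemma finPEY: "finite (PEY I')" unfolding PEY_I' by (intro finite_UN_I) (auto intro: finite_exps)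

lemma ps_bound: "n < length ps \<Longrightarrow> fst (ps ! n) < length cs \<and> snd (ps ! n) < length cs \<and>
    (cs ! fst (ps ! n), cs ! snd (ps ! n)) \<in> Lell I"
proof -
  assume "n < length ps"
  hence "ps ! n \<in> set ps" by simp
  thus ?thesis unfolding ps_def set_prs by auto
qed

lemma atom_names:
  assumes "(x, y, y') \<in> set (Patoms I')"
  shows "x \<in> PX I' \<and> y \<in> PY I' \<union> PEY I' \<and> y' \<in> PY I' \<union> PEY I'"
proof -
  from assms obtain n where n: "n < length ps"
    and m: "(x, y, y') \<in> set (ratoms (exn v0) E (kn v0 (fst (ps ! n))) (kn v0 (snd (ps ! n))) [n])"
    using atoms_I' by blast
  note nm = ratoms_names[OF m]
  have "x \<in> anames E" using nm by blast
  hence "x \<in> PX I'" using anames_cexp[of M N "LC I"] cvars unfolding E_def PX_I' by blast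
  moreover have "kn v0 (fst (ps ! n)) \<in> PY I'" "kn v0 (snd (ps ! n)) \<in> PY I'"
    using ps_bound[OF n] PY_I' by auto
  moreover have "exn v0 ` exps E [n] \<subseteq> PEY I'" using PEY_I' n by blast
  ultimately show ?thesis using nm by blast
qed

lemma valid_I': "pent_valid I'"
proof -
  have d1: "PX I' \<inter> PY I' = {}" using PX_mod PY_mod by fastforce
  have d2: "PX I' \<inter> PEY I' = {}" using PX_mod PEY_mod by fastforce
  have d3: "PY I' \<inter> PEY I' = {}" using PY_mod PEY_mod by fastforce
  have w: "\<forall>v \<in> PX I' \<union> PY I'. 0 \<le> Pw I' v \<and> Pw I' v \<le> 1"
  proof
    fix w assume "w \<in> PX I' \<union> PY I'"
    thus "0 \<le> Pw I' w \<and> Pw I' w \<le> 1"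
    proof
      assume "w \<in> PX I'"
      then obtain v i where vi: "w = (v, 3 * i)" "v \<in> LV I" using PX_I' by blast
      have "0 \<le> Lw I v" "Lw I v \<le> 1" using vI vi(2) unfolding lat_valid_def by auto
      moreover have "(1::real) \<le> 4^N" by simp
      ultimately have "Lw I v \<le> 2 * 4^N" by linarith
      with \<open>0 \<le> Lw I v\<close> have "0 \<le> Lw I v / (2 * 4^N)" "Lw I v / (2 * 4^N) \<le> 1"
        by (auto simp: divide_le_eq)
      thus ?thesis using vi(1) Pw_I' by simp
    next
      assume "w \<in> PY I'"
      hence "snd w mod 3 = 1" by (rule PY_mod)
      moreover have "1 / (2 * real (length cs)) \<le> 1"
      proof -
        have "Suc 0 \<le> length cs" using K_pos by (rule Suc_leI)
        hence "(1::real) \<le> real (length cs)" by simp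
        thus ?thesis by (simp add: divide_le_eq)
      qed
      ultimately show ?thesis using Pw_I' by (cases w) auto
    qed
  qed
  have sX: "sum (Pw I') (PX I') = 1/2"
  proof -
    have inj: "inj_on (\<lambda>(v, i). (v, 3 * i)) (LV I \<times> {..<(4::nat)^N})" by (auto simp: inj_on_def)
    have X: "PX I' = (\<lambda>(v, i). (v, 3 * i)) ` (LV I \<times> {..<4^N})" unfolding I'_def mk_inst_def by simp
    have "sum (Pw I') (PX I') = (\<Sum>(v, i) \<in> LV I \<times> {..<(4::nat)^N}. Pw I' (v, 3 * i))"
      unfolding X by (subst sum.reindex[OF inj]) (simp add: case_prod_beta')
    also have "\<dots> = (\<Sum>(v, i) \<in> LV I \<times> {..<(4::nat)^N}. Lw I v / (2 * 4^N))" using Pw_I' by simp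
    also have "\<dots> = (\<Sum>v \<in> LV I. \<Sum>i<(4::nat)^N. Lw I v / (2 * 4^N))" by (simp only: sum.cartesian_product)
    also have "\<dots> = (\<Sum>v \<in> LV I. Lw I v / 2)" by simp
    also have "\<dots> = sum (Lw I) (LV I) / 2" by (simp add: sum_divide_distrib)
    also have "\<dots> = 1/2" using vI unfolding lat_valid_def by simp
    finally show ?thesis .
  qed
  have sY: "sum (Pw I') (PY I') = 1/2"
  proof -
    have inj: "inj_on (kn v0) {..<length cs}" by (auto simp: inj_on_def kn_def)
    have "sum (Pw I') (PY I') = (\<Sum>j<length cs. Pw I' (kn v0 j))"
      unfolding PY_I' by (rule sum.reindex[OF inj, unfolded comp_def])
    also have "\<dots> = (\<Sum>j<length cs. 1 / (2 * real (length cs)))" using Pw_I' by (simp add: kn_def)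
    also have "\<dots> = 1/2" using K_pos by simp
    finally show ?thesis .
  qed
  have "sum (Pw I') (PX I' \<union> PY I') = sum (Pw I') (PX I') + sum (Pw I') (PY I')"
    by (rule sum.union_disjoint[OF finPX finPY d1])
  hence "sum (Pw I') (PX I' \<union> PY I') = 1" using sX sY by simp
  moreover have "\<forall>(x, y, y') \<in> set (Patoms I'). x \<in> PX I' \<union> PEX I' \<and> y \<in> PY I' \<union> PEY I' \<and> y' \<in> PY I' \<union> PEY I'"
    using atom_names by blast
  ultimately show ?thesis unfolding pent_valid_def using finPX finPY finPEY PEX_I' d1 d2 d3 w by auto
qed

lemma card_I': "real (card (PX I' \<union> PY I')) \<le> real (4^N + length cs) * real (card (LV I))"
proof -
  have "card (PX I') \<le> card (LV I \<times> {..<(4::nat)^N})"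
    using card_image_le[of "LV I \<times> {..<(4::nat)^N}" "\<lambda>(v,i). (v, 3*i)"] finLV unfolding I'_def mk_inst_def by simp
  hence cx: "card (PX I') \<le> 4^N * card (LV I)" by (simp add: card_cartesian_product mult.commute)
  have cy: "card (PY I') \<le> length cs" unfolding PY_I' using card_image_le[of "{..<length cs}" "kn v0"] by simp
  have "1 \<le> card (LV I)" using finLV LVne by (simp add: Suc_le_eq card_gt_0_iff)
  hence k: "length cs * 1 \<le> length cs * card (LV I)" by (rule mult_le_mono2)
  have "card (PX I' \<union> PY I') \<le> 4^N * card (LV I) + length cs * card (LV I)"
    using card_Un_le[of "PX I'" "PY I'"] cx cy k by linarith
  hence "card (PX I' \<union> PY I') \<le> (4^N + length cs) * card (LV I)" by (simp add: add_mult_distrib)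
  thus ?thesis by (metis of_nat_le_iff of_nat_mult)
qed

lemma local_I': "\<forall>w \<in> PX I' \<union> PY I'. \<exists>Q \<subseteq> LV I. card Q \<le> 1 \<and>
   (\<forall>f g. (\<forall>q \<in> Q. f q = g q) \<longrightarrow> mk_dec cs enc f w = mk_dec cs enc g w)"
proof
  fix w assume "w \<in> PX I' \<union> PY I'"
  thus "\<exists>Q \<subseteq> LV I. card Q \<le> 1 \<and> (\<forall>f g. (\<forall>q \<in> Q. f q = g q) \<longrightarrow> mk_dec cs enc f w = mk_dec cs enc g w)"
  proof
    assume "w \<in> PX I'"
    then obtain v i where vi: "w = (v, 3 * i)" "v \<in> LV I" using PX_I' by blast
    show ?thesis by (rule exI[of _ "{v}"]) (auto simp: vi mk_dec_def)
  next
    assume "w \<in> PY I'"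
    hence "snd w mod 3 = 1" by (rule PY_mod)
    thus ?thesis by (intro exI[of _ "{}"]) (simp add: mk_dec_def)
  qed
qed

lemma assign_I':
  assumes "lat_assign (LP P al be ga) I f"
  shows "pent_assign P be ga I' (mk_dec cs enc f)"
  unfolding pent_assign_def
proof (intro conjI ballI)
  fix x assume "x \<in> PX I'"
  then obtain v i where vi: "x = (v, 3 * i)" "v \<in> LV I" using PX_I' by blast
  have "f v \<in> LP P al be ga" using assms vi(2) unfolding lat_assign_def by blast
  thus "mk_dec cs enc f x \<in> P // be" using enc vi(1) by (simp add: mk_dec_def)
next
  fix y assume "y \<in> PY I'"
  then obtain j where j: "y = kn v0 j" "j < length cs" using PY_I' by blast
  have "Suc (3*j) div 3 = j" "Suc (3*j) mod 3 = 1" by presburger+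
  moreover have "cs ! j \<in> P // ga" using j(2) cs(1) nth_mem by blast
  ultimately show "mk_dec cs enc f y \<in> P // ga" using j by (simp add: mk_dec_def kn_def)
qed


lemma notrange_PXY: "w \<in> PX I' \<union> PY I' \<Longrightarrow> w \<notin> range (exn v0)"
proof
  assume w: "w \<in> PX I' \<union> PY I'" and "w \<in> range (exn v0)"
  then obtain q where "w = exn v0 q" by blast
  hence "snd w mod 3 = 2" using exn_mod by simp
  thus False using w PX_mod PY_mod by fastforce
qed

lemma Pw_nonneg: "w \<in> PX I' \<union> PY I' \<Longrightarrow> 0 \<le> Pw I' w"
  using valid_I' unfolding pent_valid_def by blast

lemma dec_PX: "mk_dec cs enc f (v, 3 * i) = enc (f v) i" by (simp add: mk_dec_def)

lemma dec_PY: "j < length cs \<Longrightarrow> mk_dec cs enc f (kn v0 j) = cs ! j"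
proof -
  have "Suc (3*j) div 3 = j" "Suc (3*j) mod 3 = 1" by presburger+
  thus ?thesis by (simp add: mk_dec_def kn_def)
qed

lemma sound_I':
  assumes fs: "lat_sat (LP P al be ga) I f"
  shows "pent_sat P al be ga I' (mk_dec cs enc f)"
proof -
  define g where "g = mk_dec cs enc f"
  have fa: "lat_assign (LP P al be ga) I f" using fs unfolding lat_sat_def by blast
  have ga: "pent_assign P be ga I' g" using assign_I'[OF fa] g_def by simp
  have fLP: "\<And>v. v \<in> LV I \<Longrightarrow> f v \<in> LP P al be ga" using fa unfolding lat_assign_def by blast
  have gB: "\<forall>v \<in> circ_vars (LC I). \<forall>i<4^N. g (v, 3*i) \<in> P // be"
    using fLP cvars enc unfolding g_def dec_PX by blast
  have "rsem (\<lambda>x. Rel P al be ga (g x)) E = circ_eval (\<lambda>v. uval P al ga N (\<lambda>i. g (v, 3*i))) (LC I)"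
    using rsem_cexp[OF pent Mbig gB] unfolding E_def by blast
  also have "\<dots> = circ_eval f (LC I)"
  proof (rule circ_eval_cong, rule ballI)
    fix v assume "v \<in> circ_vars (LC I)"
    hence "v \<in> LV I" using cvars by blast
    thus "uval P al ga N (\<lambda>i. g (v, 3*i)) = f v" using enc[OF fLP] unfolding g_def dec_PX by simp
  qed
  finally have Eeq: "rsem (\<lambda>x. Rel P al be ga (g x)) E = circ_eval f (LC I)" .
  have ell: "Lell I \<subseteq> circ_eval f (LC I)" using fs unfolding lat_sat_def by blast
  let ?Q = "\<lambda>n H. (\<forall>w. w \<notin> exn v0 ` under [n] \<longrightarrow> H w = g w) \<and> (\<forall>q \<in> exps E [n]. H (exn v0 q) \<in> P // ga) \<and>
     (\<forall>(x, z, z') \<in> set (ratoms (exn v0) E (kn v0 (fst (ps ! n))) (kn v0 (snd (ps ! n))) [n]).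
         (H z, H z') \<in> Rel P al be ga (g x))"
  have "\<forall>n \<in> {..<length ps}. \<exists>H. ?Q n H"
  proof
    fix n assume "n \<in> {..<length ps}"
    hence n: "n < length ps" by simp
    note b = ps_bound[OF n]
    have r: "(g (kn v0 (fst (ps ! n))), g (kn v0 (snd (ps ! n)))) \<in> rsem (\<lambda>x. Rel P al be ga (g x)) E"
      using b dec_PY ell Eeq unfolding g_def by auto
    have k1: "kn v0 (fst (ps ! n)) \<notin> exn v0 ` under [n]" and k2: "kn v0 (snd (ps ! n)) \<notin> exn v0 ` under [n]"
      by (rule kn_notin_exn)+
    have rs: "\<And>x. (\<lambda>x. Rel P al be ga (g x)) x \<subseteq> (P // ga) \<times> (P // ga)" by (simp add: Rel_sub)
    show "\<exists>H. ?Q n H"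
      by (rule ratoms_complete[OF inj_exn[of v0] r k1 k2 rs])
  qed
  then obtain H where H: "\<forall>n \<in> {..<length ps}. ?Q n (H n)" by (rule bchoice[elim_format]) blast
  define h where "h w = (if w \<in> range (exn v0) \<and> inv (exn v0) w \<noteq> [] \<and> last (inv (exn v0) w) < length ps
      then H (last (inv (exn v0) w)) w else g w)" for w
  have agree: "h w = H n w" if n: "n < length ps" and w: "w \<notin> range (exn v0) \<or> w \<in> exn v0 ` under [n]" for n w
    using w
  proof
    assume w1: "w \<notin> range (exn v0)"
    hence "h w = g w" unfolding h_def by simp
    moreover have "?Q n (H n)" using H n by blast
    hence "H n w = g w" using w1 by blast
    ultimately show ?thesis by simp
  next
    assume "w \<in> exn v0 ` under [n]"
    then obtain q where q: "w = exn v0 q" "q \<in> under [n]" by blast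
    then obtain s where s: "q = s @ [n]" unfolding under_def by blast
    have "inv (exn v0) w = q" using q(1) inv_f_f[OF inj_exn[of v0]] by simp
    thus ?thesis unfolding h_def using q(1) s n by auto
  qed
  show ?thesis unfolding g_def[symmetric] pent_sat_def
  proof (intro conjI exI[of _ h])
    show "pent_assign P be ga I' g" by (rule ga)
    show "\<forall>v \<in> PX I' \<union> PY I'. h v = g v" using notrange_PXY unfolding h_def by auto
    show "\<forall>x \<in> PEX I'. h x \<in> P // be" using PEX_I' by simp
    show "\<forall>y \<in> PEY I'. h y \<in> P // ga"
    proof
      fix y assume "y \<in> PEY I'"
      then obtain n q where nq: "n < length ps" "q \<in> exps E [n]" "y = exn v0 q" using PEY_I' by blast
      have "q \<in> under [n]" using nq(2) exps_under by blast
      hence "h y = H n y" using agree[OF nq(1)] nq(3) by blast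
      thus "h y \<in> P // ga" using H nq by auto
    qed
    show "\<forall>(x, y, y') \<in> set (Patoms I'). pR P al be ga (h x) (h y) (h y')"
    proof (clarify)
      fix x y y' assume a: "(x, y, y') \<in> set (Patoms I')"
      then obtain n where n: "n < length ps"
        and m: "(x, y, y') \<in> set (ratoms (exn v0) E (kn v0 (fst (ps ! n))) (kn v0 (snd (ps ! n))) [n])"
        using atoms_I' by blast
      have an: "x \<in> PX I'" "y \<in> PY I' \<union> PEY I'" "y' \<in> PY I' \<union> PEY I'" using atom_names[OF a] by auto
      have "\<And>z. z \<in> PY I' \<union> PEY I' \<Longrightarrow> z \<in> {kn v0 (fst (ps ! n)), kn v0 (snd (ps ! n))} \<union> exn v0 ` exps E [n] \<Longrightarrow> h z = H n z"
      proof -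
        fix z assume z1: "z \<in> PY I' \<union> PEY I'" and z2: "z \<in> {kn v0 (fst (ps ! n)), kn v0 (snd (ps ! n))} \<union> exn v0 ` exps E [n]"
        show "h z = H n z"
        proof (cases "z \<in> exn v0 ` exps E [n]")
          case True thus ?thesis using agree[OF n] exps_under by blast
        next
          case False
          hence "z \<in> {kn v0 (fst (ps ! n)), kn v0 (snd (ps ! n))}" using z2 by blast
          hence "z \<in> PY I'" using ps_bound[OF n] PY_I' by auto
          thus ?thesis using agree[OF n] notrange_PXY by blast
        qed
      qed
      hence hy: "h y = H n y" "h y' = H n y'" using ratoms_names[OF m] an by blast+
      have hx: "h x = g x" using notrange_PXY an(1) unfolding h_def by auto
      have "?Q n (H n)" using H n by blast
      hence "(H n y, H n y') \<in> Rel P al be ga (g x)" using m by fastforce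
      thus "pR P al be ga (h x) (h y) (h y')" unfolding hx hy pR_Rel .
    qed
  qed
qed


lemma dist_I':
  assumes fa: "lat_assign (LP P al be ga) I f" and eps: "0 < \<epsilon>" "\<epsilon> < 1"
    and far: "lat_dist (LP P al be ga) I f \<ge> ereal \<epsilon>"
  shows "pent_dist P al be ga I' (mk_dec cs enc f) \<ge> ereal (1 / (2 * real (4^N + length cs)) * \<epsilon>)"
  unfolding pent_dist_def
proof (rule Inf_greatest, clarify)
  fix h assume hs: "pent_sat P al be ga I' h"
  define g where "g = mk_dec cs enc f"
  define S where "S = {v \<in> PX I' \<union> PY I'. g v \<noteq> h v}"
  define c1 where "c1 = 1 / (2 * real (4^N + length cs))"
  have finS: "finite S" unfolding S_def using finPX finPY by simp
  have Snn: "\<And>x. x \<in> S \<Longrightarrow> 0 \<le> Pw I' x" using Pw_nonneg unfolding S_def by blast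
  have r1: "(1::real) \<le> 4^N" by simp
  have K1: "(1::real) \<le> real (length cs)"
  proof -
    have "Suc 0 \<le> length cs" using K_pos by (rule Suc_leI)
    thus ?thesis by simp
  qed
  have "0 < (4::nat)^N + length cs" by simp
  hence rpos: "0 < real ((4::nat)^N + length cs)" by (simp only: of_nat_0_less_iff)
  hence c1pos: "0 < c1" unfolding c1_def by simp
  have goal: "c1 * \<epsilon> \<le> sum (Pw I') S"
  proof (cases "\<exists>x \<in> S. x \<in> PY I'")
    case True
    then obtain x where x: "x \<in> S" "x \<in> PY I'" by blast
    have "Pw I' x = 1 / (2 * real (length cs))" using PY_mod[OF x(2)] Pw_I' by (cases x) simp
    moreover have "Pw I' x \<le> sum (Pw I') S" by (rule member_le_sum[OF x(1)]) (auto intro: Snn finS)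
    moreover have "c1 * \<epsilon> \<le> 1 / (2 * real (length cs))"
    proof -
      have "c1 * \<epsilon> \<le> c1" using eps c1pos by (simp add: mult_le_cancel_left1)
      also have "c1 \<le> 1 / (2 * real (length cs))"
      proof -
        have a: "0 < 2 * real (length cs)" using K1 by linarith
        have b: "0 < 2 * real ((4::nat)^N + length cs)" using rpos by simp
        have le: "2 * real (length cs) \<le> 2 * real ((4::nat)^N + length cs)" by simp
        show ?thesis unfolding c1_def by (rule divide_left_mono[OF le _ mult_pos_pos[OF b a]]) simp
      qed
      finally show ?thesis .
    qed
    ultimately show ?thesis by linarith
  next
    case False
    have hY: "h (kn v0 j) = cs ! j" if j: "j < length cs" for j
    proof -
      have kY: "kn v0 j \<in> PY I'" using PY_I' j by blast
      hence "kn v0 j \<notin> S" using False by blast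
      hence "g (kn v0 j) = h (kn v0 j)" using kY unfolding S_def by blast
      thus ?thesis using dec_PY[OF j] unfolding g_def by simp
    qed
    obtain H where H: "\<forall>v \<in> PX I' \<union> PY I'. H v = h v"
      "\<forall>(x, y, y') \<in> set (Patoms I'). pR P al be ga (H x) (H y) (H y')"
      using hs unfolding pent_sat_def by blast
    have hB: "\<And>v i. v \<in> LV I \<Longrightarrow> i < 4^N \<Longrightarrow> h (v, 3*i) \<in> P // be"
      using hs PX_I' unfolding pent_sat_def pent_assign_def by blast
    have Hh: "\<And>v i. v \<in> LV I \<Longrightarrow> i < 4^N \<Longrightarrow> H (v, 3*i) = h (v, 3*i)"
      using H(1) PX_I' by blast
    define gl where "gl v = uval P al ga N (\<lambda>i. h (v, 3*i))" for v
    have glLP: "lat_assign (LP P al be ga) I gl" unfolding lat_assign_def gl_def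
    proof
      fix v assume v: "v \<in> LV I"
      show "uval P al ga N (\<lambda>i. h (v, 3*i)) \<in> LP P al be ga" by (rule uval_LP) (simp add: hB[OF v])
    qed
    have HB: "\<forall>v \<in> circ_vars (LC I). \<forall>i<4^N. H (v, 3*i) \<in> P // be"
      using hB Hh cvars by auto
    have Heq: "rsem (\<lambda>x. Rel P al be ga (H x)) E = circ_eval gl (LC I)"
    proof -
      have "rsem (\<lambda>x. Rel P al be ga (H x)) E = circ_eval (\<lambda>v. uval P al ga N (\<lambda>i. H (v, 3*i))) (LC I)"
        using rsem_cexp[OF pent Mbig HB] unfolding E_def by blast
      also have "\<dots> = circ_eval gl (LC I)"
      proof (rule circ_eval_cong, rule ballI)
        fix v assume "v \<in> circ_vars (LC I)"
        hence v: "v \<in> LV I" using cvars by blast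
        show "uval P al ga N (\<lambda>i. H (v, 3*i)) = gl v" unfolding gl_def
          by (rule uval_cong) (simp add: Hh[OF v])
      qed
      finally show ?thesis .
    qed
    have "Lell I \<subseteq> circ_eval gl (LC I)"
    proof (clarify)
      fix c c' assume cc: "(c, c') \<in> Lell I"
      have "c \<in> P // ga" "c' \<in> P // ga" using LP_props[OF pent ell_LP] cc by auto
      then obtain i j where ij: "i < length cs" "cs ! i = c" "j < length cs" "cs ! j = c'"
        using cs(1) by (metis in_set_conv_nth)
      have "(i, j) \<in> set ps" unfolding ps_def set_prs using ij cc by auto
      then obtain n where n: "n < length ps" "ps ! n = (i, j)" by (metis in_set_conv_nth)
      have "\<forall>(x, z, z') \<in> set (ratoms (exn v0) E (kn v0 i) (kn v0 j) [n]). (H z, H z') \<in> Rel P al be ga (H x)"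
      proof (clarify)
        fix x z z' assume m: "(x, z, z') \<in> set (ratoms (exn v0) E (kn v0 i) (kn v0 j) [n])"
        hence "(x, z, z') \<in> set (Patoms I')" using atoms_I' n by fastforce
        hence "pR P al be ga (H x) (H z) (H z')" using H(2) by blast
        thus "(H z, H z') \<in> Rel P al be ga (H x)" unfolding pR_Rel .
      qed
      hence "(H (kn v0 i), H (kn v0 j)) \<in> rsem (\<lambda>x. Rel P al be ga (H x)) E" by (rule ratoms_sound)
      moreover have "H (kn v0 i) = c" "H (kn v0 j) = c'" using H(1) PY_I' ij hY by auto
      ultimately show "(c, c') \<in> circ_eval gl (LC I)" using Heq by simp
    qed
    hence gls: "lat_sat (LP P al be ga) I gl" using glLP unfolding lat_sat_def by blast
    define T where "T = {v \<in> LV I. f v \<noteq> gl v}"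
    have "lat_dist (LP P al be ga) I f \<le> ereal (sum (Lw I) T)"
      unfolding lat_dist_def T_def using gls by (intro Inf_lower) blast
    hence "ereal \<epsilon> \<le> ereal (sum (Lw I) T)" using far by (rule order_trans[rotated])
    hence epsT: "\<epsilon> \<le> sum (Lw I) T" by simp
    have "\<forall>v \<in> T. \<exists>i. i < 4^N \<and> (v, 3*i) \<in> S"
    proof
      fix v assume v: "v \<in> T"
      hence vL: "v \<in> LV I" unfolding T_def by blast
      have fLP: "f v \<in> LP P al be ga" using fa vL unfolding lat_assign_def by blast
      show "\<exists>i. i < 4^N \<and> (v, 3*i) \<in> S"
      proof (rule ccontr)
        assume "\<not> ?thesis"
        hence "\<forall>i<4^N. enc (f v) i = h (v, 3*i)" unfolding S_def g_def using PX_I' vL by (auto simp: dec_PX)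
        hence "uval P al ga N (enc (f v)) = gl v" unfolding gl_def by (rule uval_cong)
        thus False using enc[OF fLP] v unfolding T_def by simp
      qed
    qed
    then obtain \<iota> where \<iota>: "\<forall>v \<in> T. \<iota> v < 4^N \<and> (v, 3 * \<iota> v) \<in> S" by (rule bchoice[elim_format]) blast
    define \<kappa> where "\<kappa> v = (v, 3 * \<iota> v)" for v
    have injk: "inj_on \<kappa> T" unfolding \<kappa>_def by (auto simp: inj_on_def)
    have kS: "\<kappa> ` T \<subseteq> S" using \<iota> unfolding \<kappa>_def by auto
    have TL: "T \<subseteq> LV I" unfolding T_def by blast
    have "sum (Lw I) T = (\<Sum>v\<in>T. (2 * 4^N) * Pw I' (\<kappa> v))"
      by (rule sum.cong) (simp_all add: \<kappa>_def Pw_I')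
    also have "\<dots> = (2 * 4^N) * sum (Pw I') (\<kappa> ` T)"
      by (simp add: sum_distrib_left sum.reindex[OF injk])
    also have "sum (Pw I') (\<kappa> ` T) \<le> sum (Pw I') S" by (rule sum_mono2[OF finS kS Snn]) blast
    hence "(2 * 4^N) * sum (Pw I') (\<kappa> ` T) \<le> (2 * 4^N) * sum (Pw I') S" by simp
    finally have "\<epsilon> \<le> (2 * 4^N) * sum (Pw I') S" using epsT by linarith
    hence "\<epsilon> / (2 * 4^N) \<le> sum (Pw I') S" by (simp add: divide_le_eq mult.commute)
    moreover have "c1 * \<epsilon> \<le> \<epsilon> / (2 * 4^N)"
    proof -
      have b: "0 < 2 * real ((4::nat)^N + length cs)" using rpos by simp
      have a: "(0::real) < 2 * 4^N" by simp
      have le: "(2::real) * 4^N \<le> 2 * real ((4::nat)^N + length cs)" by simp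
      have "c1 \<le> 1 / (2 * 4^N)" unfolding c1_def by (rule divide_left_mono[OF le _ mult_pos_pos[OF b a]]) simp
      hence "c1 * \<epsilon> \<le> 1 / (2 * 4^N) * \<epsilon>" using eps(1) by (intro mult_right_mono) auto
      thus ?thesis by simp
    qed
    ultimately show ?thesis by linarith
  qed
  thus "ereal (1 / (2 * real (4^N + length cs)) * \<epsilon>) \<le> ereal (sum (Pw I') {v \<in> PX I' \<union> PY I'. mk_dec cs enc f v \<noteq> h v})"
    unfolding S_def g_def c1_def by simp
qed


lemma all_I':
  "pent_valid (mk_inst M N cs I :: ('v \<times> nat) pent_inst) \<and>
   real (card (PX (mk_inst M N cs I :: ('v \<times> nat) pent_inst) \<union> PY (mk_inst M N cs I :: ('v \<times> nat) pent_inst)))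
      \<le> real (4^N + length cs) * real (card (LV I)) \<and>
   (\<forall>v' \<in> PX (mk_inst M N cs I :: ('v \<times> nat) pent_inst) \<union> PY (mk_inst M N cs I :: ('v \<times> nat) pent_inst).
      \<exists>Q \<subseteq> LV I. card Q \<le> 1 \<and> (\<forall>f g. (\<forall>q \<in> Q. f q = g q) \<longrightarrow> mk_dec cs enc f v' = mk_dec cs enc g v'))"
  using valid_I' card_I' local_I' unfolding I'_def by blast

lemma all_f:
  assumes "lat_assign (LP P al be ga) I f"
  shows "pent_assign P be ga (mk_inst M N cs I :: ('v \<times> nat) pent_inst) (mk_dec cs enc f) \<and>
    (lat_sat (LP P al be ga) I f \<longrightarrow> pent_sat P al be ga (mk_inst M N cs I :: ('v \<times> nat) pent_inst) (mk_dec cs enc f)) \<and>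
    (\<forall>\<epsilon>::real. 0 < \<epsilon> \<and> \<epsilon> < 1 \<longrightarrow> lat_dist (LP P al be ga) I f \<ge> ereal \<epsilon> \<longrightarrow>
       pent_dist P al be ga (mk_inst M N cs I :: ('v \<times> nat) pent_inst) (mk_dec cs enc f) \<ge> ereal (1 / (2 * real (4^N + length cs)) * \<epsilon>))"
  using assign_I'[OF assms] sound_I' dist_I'[OF assms] unfolding I'_def by blast
end
end

theorem mainTheorem15:
  fixes P :: "'a set" and al be ga :: "('a \<times> 'a) set" and D :: real
  assumes "pentagon P al be ga" and "D \<ge> 1"
  shows "\<exists>red :: ('v, 'a) lat_inst \<Rightarrow>
             (('v \<times> nat) pent_inst \<times> (('v \<Rightarrow> 'a crel) \<Rightarrow> ('v \<times> nat) \<Rightarrow> 'a set)) pmf.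
           linear_reduction P al be ga D red"
proof -
  obtain N where N: "\<forall>m \<in> LP P al be ga. rep P al be ga N m" using rep_all[OF assms(1)] by blast
  obtain cs where cs: "set cs = P // ga" "distinct cs"
    using finite_distinct_list[OF finite_C[OF assms(1)]] by blast
  define enc where "enc m = (SOME p. (\<forall>i. p i \<in> P // be) \<and> uval P al ga N p = m)" for m
  have encp: "(\<forall>i. enc m i \<in> P // be) \<and> uval P al ga N (enc m) = m" if m: "m \<in> LP P al be ga" for m
  proof -
    have "\<exists>p. (\<forall>i. p i \<in> P // be) \<and> uval P al ga N p = m" using N m unfolding rep_def by blast
    thus ?thesis unfolding enc_def by (rule someI_ex)
  qed
  define M where "M = card ((P // ga) \<times> (P // ga))"
  interpret constr P al be ga M N cs enc D
    by (unfold_locales) (use assms(1) cs encp M_def in auto)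
  define red :: "('v, 'a) lat_inst \<Rightarrow> (('v \<times> nat) pent_inst \<times> (('v \<Rightarrow> 'a crel) \<Rightarrow> ('v \<times> nat) \<Rightarrow> 'a set)) pmf"
    where "red I = return_pmf (mk_inst M N cs I, mk_dec cs enc)" for I
  have "0 < (4::nat)^N + length cs" by simp
  hence c0: "0 < real (4^N + length cs)" by (simp only: of_nat_0_less_iff)
  hence c1: "0 < 1 / (2 * real (4^N + length cs))" by simp
  have "linear_reduction P al be ga D red"
    unfolding linear_reduction_def
  proof (rule exI[of _ "real (4^N + length cs)"], rule exI[of _ "1 / (2 * real (4^N + length cs))"],
      rule exI[of _ "1::nat"], intro conjI c0 c1 allI impI)
    fix I :: "('v, 'a) lat_inst" assume vI: "lat_valid (LP P al be ga) D I"
    note A = all_I'[OF vI]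
    show "\<forall>(I', dec) \<in> set_pmf (red I). pent_valid I' \<and>
            real (card (PX I' \<union> PY I')) \<le> real (4^N + length cs) * real (card (LV I)) \<and>
            (\<forall>v' \<in> PX I' \<union> PY I'. \<exists>Q \<subseteq> LV I. card Q \<le> 1 \<and>
               (\<forall>f g. (\<forall>q \<in> Q. f q = g q) \<longrightarrow> dec f v' = dec g v'))"
      unfolding red_def using A by simp
  next
    fix I :: "('v, 'a) lat_inst" and f assume vI: "lat_valid (LP P al be ga) D I"
      and fa: "lat_assign (LP P al be ga) I f"
    note B = all_f[OF vI fa]
    show "\<forall>(I', dec) \<in> set_pmf (red I).
               pent_assign P be ga I' (dec f) \<and>
               (lat_sat (LP P al be ga) I f \<longrightarrow> pent_sat P al be ga I' (dec f))"
      unfolding red_def using B by simp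
  next
    fix I :: "('v, 'a) lat_inst" and f and \<epsilon> :: real assume vI: "lat_valid (LP P al be ga) D I"
      and fa: "lat_assign (LP P al be ga) I f"
      and e: "0 < \<epsilon> \<and> \<epsilon> < 1" and far: "lat_dist (LP P al be ga) I f \<ge> ereal \<epsilon>"
    note B = all_f[OF vI fa]
    have "pent_dist P al be ga (mk_inst M N cs I :: ('v \<times> nat) pent_inst) (mk_dec cs enc f)
            \<ge> ereal (1 / (2 * real (4^N + length cs)) * \<epsilon>)" using B e far by blast
    thus "measure_pmf.prob (red I)
               {(I', dec). pent_dist P al be ga I' (dec f) \<ge> ereal (1 / (2 * real (4^N + length cs)) * \<epsilon>)} \<ge> 9 / 10"
      unfolding red_def by simp
  qed
  thus ?thesis by blast
qed

end
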